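(* Let $K$ be a field of characteristic zero. For $0\le i\le n$ let $E_i$ denote the injective hull of $K$ over $K[X_1,\ldots,X_i]$ (with $E_0=K$), with its natural module structure over the Weyl algebra $A_i(K)$. Then for each $c=1,\ldots,n$, \[H_i(\partial_c,\partial_{c+1},\ldots,\partial_n;E_n)=\begin{cases}0 & i>0,\\ E_{c-1}& i=0,\end{cases}\] where the isomorphism for $i=0$ is as $A_{c-1}(K)$-modules.
   Context: $E_i=\bigoplus_{r_1,\ldots,r_i\ge0}K\,\frac{1}{X_1\cdots X_iX_1^{r_1}\cdots X_i^{r_i}}$, where $X_j$ lowers $r_j$ by one (giving $0$ if $r_j=0$) and $\partial_j$ sends the basis element with exponent $r_j$ to $(-r_j-1)$ times the basis element with $r_j$ replaced by $r_j+1$. $H_i(\partial_c,\ldots,\partial_n;N)$ is the $i$-th Koszul homology of $N$ with respect to the commuting $K$-linear maps $\partial_c,\ldots,\partial_n$; it is a module over $A_{c-1}(K)=K\langle X_1,\ldots,X_{c-1},\partial_1,\ldots,\partial_{c-1}\rangle$. *)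

theory Defs
  imports Main "HOL-Library.Function_Algebras"
begin

text \<open>Elements of E_i are finitely supported coefficient functions on exponent
vectors r :: nat => nat (r j is the exponent of X_j), supported on indices 1..i.
The function f stands for the sum over r of f r times 1/(X_1...X_i X_1^(r_1)...X_i^(r_i)).\<close>

definition Ecarrier :: "nat \<Rightarrow> ((nat \<Rightarrow> nat) \<Rightarrow> 'k::zero) set" where
  "Ecarrier i = {f. finite {r. f r \<noteq> 0} \<and>
     (\<forall>r. f r \<noteq> 0 \<longrightarrow> (\<forall>j. (j = 0 \<or> i < j) \<longrightarrow> r j = 0))}"

text \<open>X_j lowers r_j by one (killing basis elements with r_j = 0).\<close>
definition Xop :: "nat \<Rightarrow> ((nat \<Rightarrow> nat) \<Rightarrow> 'k::field) \<Rightarrow> ((nat \<Rightarrow> nat) \<Rightarrow> 'k)" where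
  "Xop j f = (\<lambda>r. f (r(j := Suc (r j))))"

text \<open>partial_j sends the basis element with exponent r_j to (-r_j-1) times the basis
element with exponent r_j+1.\<close>
definition Dop :: "nat \<Rightarrow> ((nat \<Rightarrow> nat) \<Rightarrow> 'k::field) \<Rightarrow> ((nat \<Rightarrow> nat) \<Rightarrow> 'k)" where
  "Dop j f = (\<lambda>r. - of_nat (r j) * f (r(j := r j - 1)))"

text \<open>Koszul complex of N (carrier M) w.r.t. commuting maps D j, j in the finite index
set J: p-chains assign to each p-subset S of J an element of M
(coefficient of e_S, with e_S the wedge of e_j, j in S in increasing order).\<close>
definition koszul_chains :: "nat set \<Rightarrow> 'v set \<Rightarrow> nat \<Rightarrow> (nat set \<Rightarrow> 'v::zero) set" where
  "koszul_chains J M p = {\<omega>. \<forall>S. (S \<subseteq> J \<and> card S = p \<longrightarrow> \<omega> S \<in> M) \<and>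
                                (\<not> (S \<subseteq> J \<and> card S = p) \<longrightarrow> \<omega> S = 0)}"

text \<open>d(e_{j_1} ... e_{j_p} x) = sum_k (-1)^(k+1) e_{..omit j_k..} (D j_k x).\<close>
definition koszul_d :: "nat set \<Rightarrow> (nat \<Rightarrow> 'v \<Rightarrow> 'v) \<Rightarrow> (nat set \<Rightarrow> 'v) \<Rightarrow> nat set \<Rightarrow> 'v::ab_group_add" where
  "koszul_d J D \<omega> T = (if T \<subseteq> J then
      (\<Sum>j\<in>J - T. if even (card {t\<in>T. t < j}) then D j (\<omega> (insert j T))
                   else - D j (\<omega> (insert j T)))
    else 0)"

definition koszul_homology_vanishes :: "nat set \<Rightarrow> (nat \<Rightarrow> 'v \<Rightarrow> 'v) \<Rightarrow> 'v::ab_group_add set \<Rightarrow> nat \<Rightarrow> bool" where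
  "koszul_homology_vanishes J D M p \<longleftrightarrow>
     (\<forall>\<omega>\<in>koszul_chains J M p. koszul_d J D \<omega> = 0 \<longrightarrow>
        (\<exists>\<eta>\<in>koszul_chains J M (Suc p). koszul_d J D \<eta> = \<omega>))"

text \<open>Boundaries in degree 0, viewed inside N (C_0 = N via omega |-> omega {}).\<close>
definition koszul_B0 :: "nat set \<Rightarrow> (nat \<Rightarrow> 'v \<Rightarrow> 'v) \<Rightarrow> 'v::ab_group_add set \<Rightarrow> 'v set" where
  "koszul_B0 J D M = {koszul_d J D \<eta> {} | \<eta>. \<eta> \<in> koszul_chains J M 1}"

end

theory Submission
  imports Defs
begin

lemma sum_fun_apply: "(\<Sum>j\<in>A. F j) x = (\<Sum>j\<in>A. F j x)"
  by (induction A rule: infinite_finite_induct) auto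

lemma sum_single: "finite A \<Longrightarrow> a \<in> A \<Longrightarrow> (\<And>j. j \<in> A \<Longrightarrow> j \<noteq> a \<Longrightarrow> g j = 0) \<Longrightarrow> sum g A = (g a :: 'a::comm_monoid_add)"
  by (simp add: sum.remove sum.neutral)

definition wt :: "nat set \<Rightarrow> (nat \<Rightarrow> nat) \<Rightarrow> nat \<Rightarrow> nat" where
  "wt S r = (\<lambda>k. r k + (if k \<in> S then 1 else 0))"

definition lj :: "nat set \<Rightarrow> (nat \<Rightarrow> nat) \<Rightarrow> nat" where
  "lj J w = (LEAST k. k \<in> J \<and> w k \<noteq> 0)"

definition hop :: "nat set \<Rightarrow> (nat set \<Rightarrow> (nat \<Rightarrow> nat) \<Rightarrow> 'k::field) \<Rightarrow> nat set \<Rightarrow> (nat \<Rightarrow> nat) \<Rightarrow> 'k" where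
  "hop J \<omega> S r = (if S \<subseteq> J \<and> (\<exists>k\<in>J. wt S r k \<noteq> 0) \<and> lj J (wt S r) \<in> S
     then - \<omega> (S - {lj J (wt S r)}) (r(lj J (wt S r) := Suc (r (lj J (wt S r)))))
          / of_nat (Suc (r (lj J (wt S r)))) else 0)"

lemma lj_in: "\<exists>k\<in>J. w k \<noteq> 0 \<Longrightarrow> lj J w \<in> J \<and> w (lj J w) \<noteq> 0"
  unfolding lj_def by (rule LeastI_ex) auto

lemma lj_le: "k \<in> J \<Longrightarrow> w k \<noteq> 0 \<Longrightarrow> lj J w \<le> k"
  unfolding lj_def by (rule Least_le) auto

lemma wt_ins: "j \<notin> T \<Longrightarrow> s j \<noteq> 0 \<Longrightarrow> wt (insert j T) (s(j := s j - 1)) = wt T s"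
  unfolding wt_def by auto

lemma wt_rem: "j \<in> T \<Longrightarrow> wt (T - {j}) (s(j := Suc (s j))) = wt T s"
  unfolding wt_def by auto

definition sg :: "nat set \<Rightarrow> nat \<Rightarrow> 'k::field" where
  "sg T j = (if even (card {t\<in>T. t < j}) then 1 else -1)"

lemma kd_apply:
  assumes "T \<subseteq> J"
  shows "koszul_d J Dop \<eta> T s = (\<Sum>j\<in>J-T. sg T j * (- of_nat (s j) * \<eta> (insert j T) (s(j := s j - 1))))"
  using assms unfolding koszul_d_def sum_fun_apply
  by (auto intro!: sum.cong simp: sg_def Dop_def)

lemma kd_notsub: "\<not> T \<subseteq> J \<Longrightarrow> koszul_d J D \<eta> T = 0"
  unfolding koszul_d_def by auto

lemma hop_zero: "\<not> (S \<subseteq> J \<and> (\<exists>k\<in>J. wt S r k \<noteq> 0) \<and> lj J (wt S r) \<in> S) \<Longrightarrow> hop J \<omega> S r = 0"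
  unfolding hop_def by auto

lemma hop_val: "S \<subseteq> J \<Longrightarrow> (\<exists>k\<in>J. wt S r k \<noteq> 0) \<Longrightarrow> lj J (wt S r) = j0 \<Longrightarrow> j0 \<in> S \<Longrightarrow>
   hop J \<omega> S r = - \<omega> (S - {j0}) (r(j0 := Suc (r j0))) / of_nat (Suc (r j0))"
  unfolding hop_def by auto

lemma case_none:
  fixes \<omega> :: "nat set \<Rightarrow> (nat \<Rightarrow> nat) \<Rightarrow> 'k::field_char_0"
  assumes "T \<subseteq> J" "\<not> (\<exists>k\<in>J. wt T s k \<noteq> 0)"
  shows "koszul_d J Dop (hop J \<omega>) T s + hop J (koszul_d J Dop \<omega>) T s = 0"
proof -
  have "hop J (koszul_d J Dop \<omega>) T s = 0" using assms by (intro hop_zero) auto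
  moreover have "koszul_d J Dop (hop J \<omega>) T s = 0"
    using assms unfolding kd_apply[OF assms(1)] by (auto simp: wt_def intro!: sum.neutral)
  ultimately show ?thesis by simp
qed

lemma case_notin:
  fixes \<omega> :: "nat set \<Rightarrow> (nat \<Rightarrow> nat) \<Rightarrow> 'k::field_char_0"
  assumes J: "finite J" and T: "T \<subseteq> J" and ex: "\<exists>k\<in>J. wt T s k \<noteq> 0" and j0: "lj J (wt T s) = j0" "j0 \<notin> T"
  shows "koszul_d J Dop (hop J \<omega>) T s + hop J (koszul_d J Dop \<omega>) T s = \<omega> T s"
proof -
  have h0: "hop J (koszul_d J Dop \<omega>) T s = 0" using j0 by (intro hop_zero) auto
  have j0J: "j0 \<in> J" and wj0: "wt T s j0 \<noteq> 0" using lj_in[OF ex] j0 by auto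
  have sj0: "s j0 \<noteq> 0" using wj0 j0 by (auto simp: wt_def)
  have "koszul_d J Dop (hop J \<omega>) T s = (\<Sum>j\<in>J-T. sg T j * (- of_nat (s j) * hop J \<omega> (insert j T) (s(j := s j - 1))))"
    by (rule kd_apply[OF T])
  also have "\<dots> = sg T j0 * (- of_nat (s j0) * hop J \<omega> (insert j0 T) (s(j0 := s j0 - 1)))"
  proof (rule sum_single)
    fix j assume j: "j \<in> J - T" "j \<noteq> j0"
    show "sg T j * (- of_nat (s j) * hop J \<omega> (insert j T) (s(j := s j - 1))) = 0"
    proof (cases "s j = 0")
      case False
      have w: "wt (insert j T) (s(j := s j - 1)) = wt T s" using j False by (intro wt_ins) auto
      have "hop J \<omega> (insert j T) (s(j := s j - 1)) = 0"
        apply (rule hop_zero) apply (subst w)+ using j j0 by auto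
      then show ?thesis by simp
    qed simp
  qed (use J j0J j0 in auto)
  also have "sg T j0 = (1::'k)"
  proof -
    have "{t\<in>T. t < j0} = {}"
    proof (rule ccontr)
      assume "{t\<in>T. t < j0} \<noteq> {}"
      then obtain t where t: "t \<in> T" "t < j0" by auto
      have "wt T s t \<noteq> 0" using t by (auto simp: wt_def)
      then have "j0 \<le> t" using lj_le[of t J "wt T s"] t T j0 by auto
      then show False using t by simp
    qed
    then show ?thesis unfolding sg_def by (simp only: card.empty) simp
  qed
  also have "hop J \<omega> (insert j0 T) (s(j0 := s j0 - 1)) = - \<omega> T s / of_nat (s j0)"
  proof -
    have "hop J \<omega> (insert j0 T) (s(j0 := s j0 - 1)) =
       - \<omega> (insert j0 T - {j0}) ((s(j0 := s j0 - 1))(j0 := Suc ((s(j0 := s j0 - 1)) j0))) / of_nat (Suc ((s(j0 := s j0 - 1)) j0))"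
      apply (rule hop_val) apply (simp_all only: wt_ins[of j0 T s, OF j0(2) sj0]) using T j0J ex j0 by auto
    moreover have "(s(j0 := s j0 - 1))(j0 := Suc ((s(j0 := s j0 - 1)) j0)) = s" using sj0 by auto
    moreover have "insert j0 T - {j0} = T" using j0 by auto
    moreover have "Suc ((s(j0 := s j0 - 1)) j0) = s j0" using sj0 by auto
    ultimately show ?thesis by simp
  qed
  finally show ?thesis using h0 sj0 by simp
qed

lemma sg_flip:
  assumes "finite T" "j0 \<in> T" "j0 < j"
  shows "sg (T - {j0}) j = - (sg T j :: 'k::field)"
proof -
  have "{t\<in>T. t < j} = insert j0 {t\<in>T - {j0}. t < j}" using assms by auto
  moreover have "j0 \<notin> {t\<in>T - {j0}. t < j}" by auto
  moreover have "finite {t\<in>T - {j0}. t < j}" using assms by auto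
  ultimately have "card {t\<in>T. t < j} = Suc (card {t\<in>T - {j0}. t < j})" by simp
  then show ?thesis unfolding sg_def by auto
qed

lemma case_in:
  fixes \<omega> :: "nat set \<Rightarrow> (nat \<Rightarrow> nat) \<Rightarrow> 'k::field_char_0"
  assumes J: "finite J" and T: "T \<subseteq> J" and ex: "\<exists>k\<in>J. wt T s k \<noteq> 0" and j0: "lj J (wt T s) = j0" "j0 \<in> T"
  shows "koszul_d J Dop (hop J \<omega>) T s + hop J (koszul_d J Dop \<omega>) T s = \<omega> T s"
proof -
  define N where "N = (of_nat (Suc (s j0)) :: 'k)"
  have N0: "N \<noteq> 0" unfolding N_def by (simp only: of_nat_eq_0_iff)
  define A where "A j = of_nat (s j) * \<omega> (insert j T - {j0}) (s(j := s j - 1, j0 := Suc (s j0))) / N" for j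
  have j0J: "j0 \<in> J" using j0 T by auto
  have finT: "finite T" using J T finite_subset by auto
  have big: "j0 < j" if "j \<in> J - T" "s j \<noteq> 0" for j
  proof -
    have "wt T s j \<noteq> 0" using that by (auto simp: wt_def)
    then have "j0 \<le> j" using lj_le[of j J "wt T s"] that j0 by auto
    then show ?thesis using that j0 by (cases "j = j0") auto
  qed
  have step1: "koszul_d J Dop (hop J \<omega>) T s = (\<Sum>j\<in>J-T. sg T j * A j)"
    unfolding kd_apply[OF T]
  proof (rule sum.cong[OF refl])
    fix j assume j: "j \<in> J - T"
    show "sg T j * (- of_nat (s j) * hop J \<omega> (insert j T) (s(j := s j - 1))) = sg T j * A j"
    proof (cases "s j = 0")
      case True then show ?thesis by (simp add: A_def)
    next
      case False
      have jj0: "j \<noteq> j0" using j j0 by auto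
      have w: "wt (insert j T) (s(j := s j - 1)) = wt T s" using j False by (intro wt_ins) auto
      have "hop J \<omega> (insert j T) (s(j := s j - 1)) =
         - \<omega> (insert j T - {j0}) ((s(j := s j - 1))(j0 := Suc ((s(j := s j - 1)) j0))) / of_nat (Suc ((s(j := s j - 1)) j0))"
        apply (rule hop_val) apply (simp_all only: w) using j j0 T ex by auto
      also have "\<dots> = - \<omega> (insert j T - {j0}) (s(j := s j - 1, j0 := Suc (s j0))) / N"
        using jj0 by (simp add: N_def)
      finally show ?thesis by (simp add: A_def)
    qed
  qed
  define T' where "T' = T - {j0}"
  define s' where "s' = s(j0 := Suc (s j0))"
  have step2: "hop J (koszul_d J Dop \<omega>) T s = - koszul_d J Dop \<omega> T' s' / N"
    unfolding T'_def s'_def N_def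
    apply (rule hop_val) using T ex j0 by auto
  have T'J: "T' \<subseteq> J" using T by (auto simp: T'_def)
  have JT': "J - T' = insert j0 (J - T)" using j0J j0 by (auto simp: T'_def)
  have step3: "koszul_d J Dop \<omega> T' s' = - N * \<omega> T s + N * (\<Sum>j\<in>J-T. sg T j * A j)"
  proof -
    have "koszul_d J Dop \<omega> T' s' = (\<Sum>j\<in>J-T'. sg T' j * (- of_nat (s' j) * \<omega> (insert j T') (s'(j := s' j - 1))))"
      by (rule kd_apply[OF T'J])
    also have "\<dots> = sg T' j0 * (- of_nat (s' j0) * \<omega> (insert j0 T') (s'(j0 := s' j0 - 1)))
       + (\<Sum>j\<in>J-T. sg T' j * (- of_nat (s' j) * \<omega> (insert j T') (s'(j := s' j - 1))))"
      unfolding JT' using J j0 by (subst sum.insert) auto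
    also have "sg T' j0 = (1::'k)"
    proof -
      have "{t\<in>T'. t < j0} = {}"
      proof (rule ccontr)
        assume "{t\<in>T'. t < j0} \<noteq> {}"
        then obtain t where t: "t \<in> T" "t < j0" by (auto simp: T'_def)
        have "wt T s t \<noteq> 0" using t by (auto simp: wt_def)
        then have "j0 \<le> t" using lj_le[of t J "wt T s"] t T j0 by auto
        then show False using t by simp
      qed
      then show ?thesis unfolding sg_def by (simp only: card.empty) simp
    qed
    also have "- of_nat (s' j0) * \<omega> (insert j0 T') (s'(j0 := s' j0 - 1)) = - N * \<omega> T s"
    proof -
      have "insert j0 T' = T" using j0 by (auto simp: T'_def)
      moreover have "s'(j0 := s' j0 - 1) = s" by (auto simp: s'_def)
      ultimately show ?thesis by (simp add: s'_def N_def)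
    qed
    also have "(\<Sum>j\<in>J-T. sg T' j * (- of_nat (s' j) * \<omega> (insert j T') (s'(j := s' j - 1))))
       = (\<Sum>j\<in>J-T. N * (sg T j * A j))"
    proof (rule sum.cong[OF refl])
      fix j assume j: "j \<in> J - T"
      have jj0: "j \<noteq> j0" using j j0 by auto
      show "sg T' j * (- of_nat (s' j) * \<omega> (insert j T') (s'(j := s' j - 1))) = N * (sg T j * A j)"
      proof (cases "s j = 0")
        case True then show ?thesis using jj0 by (simp add: A_def s'_def)
      next
        case False
        have sg: "sg T' j = - (sg T j :: 'k)" unfolding T'_def by (rule sg_flip[OF finT j0(2) big[OF j False]])
        have e1: "insert j T' = insert j T - {j0}" using jj0 by (auto simp: T'_def)
        have e3: "s' j = s j" using jj0 by (simp add: s'_def)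
        have e2: "s'(j := s j - 1) = s(j := s j - 1, j0 := Suc (s j0))"
          using jj0 by (auto simp: s'_def fun_eq_iff)
        show ?thesis unfolding sg e1 e3 e2 A_def using N0 by (simp add: field_simps)
      qed
    qed
    finally show ?thesis by (simp add: sum_distrib_left)
  qed
  show ?thesis unfolding step1 step2 step3 using N0 by (simp add: field_simps)
qed

lemma homotopy:
  fixes \<omega> :: "nat set \<Rightarrow> (nat \<Rightarrow> nat) \<Rightarrow> 'k::field_char_0"
  assumes J: "finite J"
  shows "koszul_d J Dop (hop J \<omega>) T s + hop J (koszul_d J Dop \<omega>) T s
     = (if T \<subseteq> J \<and> (\<exists>k\<in>J. wt T s k \<noteq> 0) then \<omega> T s else 0)"
proof (cases "T \<subseteq> J")
  case False
  then show ?thesis by (simp add: kd_notsub hop_zero)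
next
  case T: True
  show ?thesis
  proof (cases "\<exists>k\<in>J. wt T s k \<noteq> 0")
    case False then show ?thesis using case_none[OF T False] T by simp
  next
    case True
    then show ?thesis using case_in[OF J T True refl] case_notin[OF J T True refl] T by (cases "lj J (wt T s) \<in> T") auto
  qed
qed

lemma hop_0: "hop J 0 S r = (0::'k::field)"
  unfolding hop_def by simp

lemma Dop_0: "Dop j 0 = (0 :: (nat \<Rightarrow> nat) \<Rightarrow> 'k::field)"
  unfolding Dop_def by (simp add: fun_eq_iff)

lemma E_0: "0 \<in> Ecarrier n"
  unfolding Ecarrier_def by simp

lemma E_add: "f \<in> Ecarrier n \<Longrightarrow> g \<in> Ecarrier n \<Longrightarrow> f + g \<in> (Ecarrier n :: ((nat\<Rightarrow>nat) \<Rightarrow> 'k::field) set)"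
proof -
  assume f: "f \<in> Ecarrier n" and g: "g \<in> Ecarrier n"
  have "{r. (f + g) r \<noteq> 0} \<subseteq> {r. f r \<noteq> 0} \<union> {r. g r \<noteq> 0}" by auto
  then have "finite {r. (f + g) r \<noteq> 0}" using f g unfolding Ecarrier_def by (auto intro: finite_subset)
  moreover have "\<forall>r. (f + g) r \<noteq> 0 \<longrightarrow> (\<forall>j. (j = 0 \<or> n < j) \<longrightarrow> r j = 0)"
  proof (intro allI impI)
    fix r j assume "(f + g) r \<noteq> 0" "j = 0 \<or> n < j"
    then have "f r \<noteq> 0 \<or> g r \<noteq> 0" by auto
    then show "r j = 0" using f g \<open>j = 0 \<or> n < j\<close> unfolding Ecarrier_def by auto
  qed
  ultimately show ?thesis unfolding Ecarrier_def by simp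
qed

lemma E_neg: "f \<in> Ecarrier n \<Longrightarrow> - f \<in> (Ecarrier n :: ((nat\<Rightarrow>nat) \<Rightarrow> 'k::field) set)"
  unfolding Ecarrier_def by simp

lemma E_sum: "(\<And>j. j \<in> A \<Longrightarrow> g j \<in> Ecarrier n) \<Longrightarrow> sum g A \<in> (Ecarrier n :: ((nat\<Rightarrow>nat) \<Rightarrow> 'k::field) set)"
  by (induction A rule: infinite_finite_induct) (auto simp: E_0 E_add)

lemma E_Dop:
  assumes f: "f \<in> Ecarrier n" and j: "1 \<le> j" "j \<le> n"
  shows "Dop j f \<in> (Ecarrier n :: ((nat\<Rightarrow>nat) \<Rightarrow> 'k::field_char_0) set)"
proof -
  have fE0: "finite {u. f u \<noteq> 0} \<and> (\<forall>u. f u \<noteq> 0 \<longrightarrow> (\<forall>k. (k = 0 \<or> n < k) \<longrightarrow> u k = 0))"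
    using f unfolding Ecarrier_def by simp
  then have fE: "finite {u. f u \<noteq> 0}" "\<And>u k. f u \<noteq> 0 \<Longrightarrow> k = 0 \<or> n < k \<Longrightarrow> u k = 0"
    by auto
  have sub: "{r. Dop j f r \<noteq> 0} \<subseteq> (\<lambda>u. u(j := Suc (u j))) ` {u. f u \<noteq> 0}"
  proof
    fix r assume "r \<in> {r. Dop j f r \<noteq> 0}"
    then have r: "r j \<noteq> 0" "f (r(j := r j - 1)) \<noteq> 0" by (auto simp: Dop_def)
    then have "r = (r(j := r j - 1))(j := Suc ((r(j := r j - 1)) j))" by (simp add: fun_eq_iff)
    then show "r \<in> (\<lambda>u. u(j := Suc (u j))) ` {u. f u \<noteq> 0}" using r by blast
  qed
  have "finite {r. Dop j f r \<noteq> 0}" by (rule finite_subset[OF sub finite_imageI[OF fE(1)]])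
  moreover have "\<forall>r. Dop j f r \<noteq> 0 \<longrightarrow> (\<forall>k. (k = 0 \<or> n < k) \<longrightarrow> r k = 0)"
  proof (intro allI impI)
    fix r k assume a: "Dop j f r \<noteq> 0" "k = 0 \<or> n < k"
    then have "f (r(j := r j - 1)) \<noteq> 0" by (auto simp: Dop_def)
    moreover have "k \<noteq> j" using j a(2) by auto
    ultimately show "r k = 0" using fE(2)[of "r(j := r j - 1)" k] a(2) by simp
  qed
  ultimately show ?thesis unfolding Ecarrier_def by simp
qed

lemma E_fin: "f \<in> Ecarrier n \<Longrightarrow> finite {u. f u \<noteq> 0}"
  unfolding Ecarrier_def by simp

lemma E_supp: assumes "f \<in> Ecarrier n" "f u \<noteq> 0" "k = 0 \<or> n < k" shows "u k = 0"
proof -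
  have "\<forall>r. f r \<noteq> 0 \<longrightarrow> (\<forall>j. (j = 0 \<or> n < j) \<longrightarrow> r j = 0)"
    using assms(1) unfolding Ecarrier_def mem_Collect_eq by (rule conjunct2)
  then have "f u \<noteq> 0 \<longrightarrow> (\<forall>j. (j = 0 \<or> n < j) \<longrightarrow> u j = 0)" by (rule spec)
  then have "\<forall>j. (j = 0 \<or> n < j) \<longrightarrow> u j = 0" using assms(2) by (rule mp)
  then have "(k = 0 \<or> n < k) \<longrightarrow> u k = 0" by (rule spec)
  then show ?thesis using assms(3) by (rule mp)
qed

lemma E_I: "finite {u. f u \<noteq> 0} \<Longrightarrow> (\<And>u k. f u \<noteq> 0 \<Longrightarrow> k = 0 \<or> n < k \<Longrightarrow> u k = 0) \<Longrightarrow> f \<in> Ecarrier n"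
  unfolding Ecarrier_def by simp

lemma chain_val: "\<omega> \<in> koszul_chains J (Ecarrier n) p \<Longrightarrow> \<omega> S \<in> Ecarrier n"
proof -
  assume w: "\<omega> \<in> koszul_chains J (Ecarrier n) p"
  show ?thesis
  proof (cases "S \<subseteq> J \<and> card S = p")
    case True then show ?thesis using w unfolding koszul_chains_def by blast
  next
    case False then have "\<omega> S = 0" using w unfolding koszul_chains_def by blast
    then show ?thesis using E_0 by simp
  qed
qed

lemma chain_zero: "\<omega> \<in> koszul_chains J M p \<Longrightarrow> \<not> (S \<subseteq> J \<and> card S = p) \<Longrightarrow> \<omega> S = 0"
  unfolding koszul_chains_def by blast

lemma hop_chain:
  fixes \<omega> :: "nat set \<Rightarrow> (nat \<Rightarrow> nat) \<Rightarrow> 'k::field_char_0"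
  assumes J: "finite J" "J \<subseteq> {1..n}" and w: "\<omega> \<in> koszul_chains J (Ecarrier n) p"
  shows "hop J \<omega> \<in> koszul_chains J (Ecarrier n) (Suc p)"
proof -
  have nz: "\<exists>j0 u. j0 \<in> S \<and> j0 \<in> J \<and> S \<subseteq> J \<and> \<omega> (S - {j0}) u \<noteq> 0 \<and> u = r(j0 := Suc (r j0))"
    if hz: "hop J \<omega> S r \<noteq> 0" for S r
  proof -
    define j0 where "j0 = lj J (wt S r)"
    have c: "S \<subseteq> J \<and> (\<exists>k\<in>J. wt S r k \<noteq> 0) \<and> j0 \<in> S"
    proof (rule ccontr)
      assume "\<not> (S \<subseteq> J \<and> (\<exists>k\<in>J. wt S r k \<noteq> 0) \<and> j0 \<in> S)"
      then have "hop J \<omega> S r = 0" unfolding j0_def by (rule hop_zero)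
      then show False using hz by simp
    qed
    have hv: "hop J \<omega> S r = - \<omega> (S - {j0}) (r(j0 := Suc (r j0))) / of_nat (Suc (r j0))"
      using c by (intro hop_val) (simp_all add: j0_def)
    have "\<omega> (S - {j0}) (r(j0 := Suc (r j0))) \<noteq> 0"
    proof
      assume "\<omega> (S - {j0}) (r(j0 := Suc (r j0))) = 0"
      then have "hop J \<omega> S r = 0" unfolding hv by simp
      then show False using hz by simp
    qed
    moreover have "j0 \<in> J" using c by blast
    ultimately show ?thesis using c by blast
  qed
  have inE: "hop J \<omega> S \<in> Ecarrier n" for S
  proof (rule E_I)
    have sub: "{r. hop J \<omega> S r \<noteq> 0} \<subseteq> (\<Union>j\<in>J. (\<lambda>u. u(j := u j - 1)) ` {u. \<omega> (S - {j}) u \<noteq> 0})"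
    proof
      fix r assume "r \<in> {r. hop J \<omega> S r \<noteq> 0}"
      then obtain j0 u where h: "j0 \<in> J" "\<omega> (S - {j0}) u \<noteq> 0" "u = r(j0 := Suc (r j0))" using nz by blast
      then have "r = u(j0 := u j0 - 1)" by (simp add: fun_eq_iff)
      then have "r \<in> (\<lambda>u. u(j0 := u j0 - 1)) ` {u. \<omega> (S - {j0}) u \<noteq> 0}"
        using h(2) by (intro image_eqI[where x=u]) simp_all
      then show "r \<in> (\<Union>j\<in>J. (\<lambda>u. u(j := u j - 1)) ` {u. \<omega> (S - {j}) u \<noteq> 0})" using h(1) by (rule UN_I[rotated])
    qed
    have "finite (\<Union>j\<in>J. (\<lambda>u. u(j := u j - 1)) ` {u. \<omega> (S - {j}) u \<noteq> 0})"
      by (intro finite_UN_I J(1) finite_imageI E_fin[OF chain_val[OF w]])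
    then show "finite {r. hop J \<omega> S r \<noteq> 0}" using sub finite_subset by blast
  next
    fix r k assume "hop J \<omega> S r \<noteq> 0" "k = 0 \<or> n < k"
    then obtain j0 u where h: "j0 \<in> J" "\<omega> (S - {j0}) u \<noteq> 0" "u = r(j0 := Suc (r j0))" using nz by blast
    have "k \<noteq> j0" using h J \<open>k = 0 \<or> n < k\<close> by auto
    have fE: "\<omega> (S - {j0}) \<in> Ecarrier n" by (rule chain_val[OF w])
    have "u k = 0" using fE h(2) \<open>k = 0 \<or> n < k\<close> by (rule E_supp[where u=u and k=k])
    then show "r k = 0" using h \<open>k \<noteq> j0\<close> by simp
  qed
  have outside: "hop J \<omega> S = 0" if "\<not> (S \<subseteq> J \<and> card S = Suc p)" for S
  proof (rule ccontr)
    assume "hop J \<omega> S \<noteq> 0"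
    then obtain r where "hop J \<omega> S r \<noteq> 0" by (auto simp: fun_eq_iff)
    then obtain j0 u where h: "j0 \<in> S" "S \<subseteq> J" "\<omega> (S - {j0}) u \<noteq> 0" using nz by blast
    have "S - {j0} \<subseteq> J \<and> card (S - {j0}) = p"
    proof (rule ccontr)
      assume "\<not> (S - {j0} \<subseteq> J \<and> card (S - {j0}) = p)"
      then have "\<omega> (S - {j0}) = 0" by (rule chain_zero[OF w])
      then show False using h(3) by simp
    qed
    moreover have fS: "finite S" using h(2) J(1) by (rule finite_subset)
    ultimately have "card S = Suc p" using card_Suc_Diff1[OF fS h(1)] by simp
    then show False using that h by simp
  qed
  show ?thesis unfolding koszul_chains_def using inE outside by blast
qed

lemma cond_upd:
  fixes j c :: nat and r :: "nat \<Rightarrow> nat"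
  assumes "j < c" shows "(\<forall>k\<ge>c. (r(j := x)) k = 0) = (\<forall>k\<ge>c. r k = 0)"
proof -
  have "(r(j := x)) k = r k" if "k \<ge> c" for k using that assms by simp
  then show ?thesis by simp
qed

theorem lemma2p2:
  fixes n c :: nat
  assumes "1 \<le> c" and "c \<le> n"
  shows "(\<forall>i>0. koszul_homology_vanishes {c..n} Dop
              (Ecarrier n :: ((nat \<Rightarrow> nat) \<Rightarrow> 'k::field_char_0) set) i)
    \<and> (\<exists>\<phi> :: ((nat \<Rightarrow> nat) \<Rightarrow> 'k) \<Rightarrow> ((nat \<Rightarrow> nat) \<Rightarrow> 'k).
          (\<forall>f\<in>Ecarrier n. \<forall>g\<in>Ecarrier n. \<forall>a b.
              \<phi> (\<lambda>r. a * f r + b * g r) = (\<lambda>r. a * \<phi> f r + b * \<phi> g r))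
        \<and> \<phi> ` Ecarrier n = Ecarrier (c - 1)
        \<and> {f\<in>Ecarrier n. \<phi> f = 0} = koszul_B0 {c..n} Dop (Ecarrier n)
        \<and> (\<forall>j\<in>{1..<c}. \<forall>f\<in>Ecarrier n.
              \<phi> (Xop j f) = Xop j (\<phi> f) \<and> \<phi> (Dop j f) = Dop j (\<phi> f)))"
proof -
  define J where "J = {c..n}"
  have J: "finite J" "J \<subseteq> {1..n}" using assms by (auto simp: J_def)
  have vanish: "\<forall>i>0. koszul_homology_vanishes J Dop (Ecarrier n :: ((nat \<Rightarrow> nat) \<Rightarrow> 'k) set) i"
  proof (intro allI impI)
    fix i :: nat assume i: "0 < i"
    show "koszul_homology_vanishes J Dop (Ecarrier n :: ((nat \<Rightarrow> nat) \<Rightarrow> 'k) set) i"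
      unfolding koszul_homology_vanishes_def
    proof (intro ballI impI)
      fix \<omega> :: "nat set \<Rightarrow> (nat \<Rightarrow> nat) \<Rightarrow> 'k"
      assume w: "\<omega> \<in> koszul_chains J (Ecarrier n) i" and d0: "koszul_d J Dop \<omega> = 0"
      show "\<exists>\<eta>\<in>koszul_chains J (Ecarrier n) (Suc i). koszul_d J Dop \<eta> = \<omega>"
      proof (intro bexI)
        show "koszul_d J Dop (hop J \<omega>) = \<omega>"
        proof (intro ext)
          fix T s
          have "koszul_d J Dop (hop J \<omega>) T s = (if T \<subseteq> J \<and> (\<exists>k\<in>J. wt T s k \<noteq> 0) then \<omega> T s else 0)"
            using homotopy[OF J(1), of \<omega> T s] by (simp add: d0 hop_0)
          also have "\<dots> = \<omega> T s"
          proof (cases "T \<subseteq> J \<and> (\<exists>k\<in>J. wt T s k \<noteq> 0)")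
            case False
            show ?thesis
            proof (cases "T \<subseteq> J")
              case False then show ?thesis using chain_zero[OF w, of T] by simp
            next
              case True
              have "\<forall>k\<in>J. k \<notin> T" using False True by (auto simp: wt_def split: if_splits)
              then have "T = {}" using True by blast
              then have "\<omega> T = 0" using chain_zero[OF w, of T] i by simp
              then show ?thesis by simp
            qed
          qed simp
          finally show "koszul_d J Dop (hop J \<omega>) T s = \<omega> T s" .
        qed
      qed (rule hop_chain[OF J w])
    qed
  qed
  define \<phi> where "\<phi> f = (\<lambda>r. if (\<forall>k\<ge>c. r k = 0) then f r else (0::'k))" for f :: "(nat \<Rightarrow> nat) \<Rightarrow> 'k"
  have lin: "\<forall>f\<in>Ecarrier n. \<forall>g\<in>Ecarrier n. \<forall>a b.
              \<phi> (\<lambda>r. a * f r + b * g r) = (\<lambda>r. a * \<phi> f r + b * \<phi> g r)"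
    by (auto simp: \<phi>_def fun_eq_iff)
  have img1: "\<phi> f \<in> Ecarrier (c - 1)" if f: "f \<in> Ecarrier n" for f
  proof (rule E_I)
    have "{r. \<phi> f r \<noteq> 0} \<subseteq> {r. f r \<noteq> 0}" by (auto simp: \<phi>_def)
    then show "finite {r. \<phi> f r \<noteq> 0}" by (rule finite_subset[OF _ E_fin[OF f]])
  next
    fix u k assume u: "\<phi> f u \<noteq> 0" "k = 0 \<or> c - 1 < k"
    then have fu: "f u \<noteq> 0" and cu: "\<forall>k\<ge>c. u k = 0" by (auto simp: \<phi>_def split: if_splits)
    show "u k = 0"
    proof (cases "k = 0")
      case True then show ?thesis using E_supp[OF f fu] by simp
    next
      case False then show ?thesis using u(2) cu by simp
    qed
  qed
  have img2: "g \<in> \<phi> ` Ecarrier n" if g: "g \<in> Ecarrier (c - 1)" for g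
  proof (rule rev_image_eqI)
    show "g \<in> Ecarrier n"
    proof (rule E_I)
      show "finite {u. g u \<noteq> 0}" by (rule E_fin[OF g])
    next
      fix u k assume "g u \<noteq> 0" "k = 0 \<or> n < k"
      then show "u k = 0" using E_supp[OF g, of u k] assms by auto
    qed
    show "g = \<phi> g"
    proof (rule ext)
      fix r
      show "g r = \<phi> g r"
      proof (cases "\<forall>k\<ge>c. r k = 0")
        case False
        then obtain k where k: "k \<ge> c" "r k \<noteq> 0" by auto
        have "g r = 0"
        proof (rule ccontr)
          assume "g r \<noteq> 0"
          moreover have "c - 1 < k" using k(1) assms(1) by simp
          ultimately have "r k = 0" using E_supp[OF g, of r k] by blast
          then show False using k by simp
        qed
        then show ?thesis by (simp add: \<phi>_def)
      next
        case True
        then show ?thesis by (simp add: \<phi>_def)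
      qed
    qed
  qed
  have img: "\<phi> ` Ecarrier n = Ecarrier (c - 1)"
  proof (rule subset_antisym)
    show "\<phi> ` Ecarrier n \<subseteq> Ecarrier (c - 1)" by (rule image_subsetI) (rule img1)
    show "Ecarrier (c - 1) \<subseteq> \<phi> ` Ecarrier n" by (rule subsetI) (rule img2)
  qed
  have ker1: "f \<in> koszul_B0 J Dop (Ecarrier n)" if f: "f \<in> Ecarrier n" and f0: "\<phi> f = 0" for f
  proof -
    define \<omega> where "\<omega> S = (if S = {} then f else 0)" for S :: "nat set"
    have w: "\<omega> \<in> koszul_chains J (Ecarrier n) 0"
      unfolding koszul_chains_def
    proof (intro CollectI allI conjI impI)
      fix S assume S: "S \<subseteq> J \<and> card S = 0"
      then have "finite S" using J(1) rev_finite_subset by blast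
      then have "S = {}" using S by simp
      then show "\<omega> S \<in> Ecarrier n" using f by (simp add: \<omega>_def)
    next
      fix S assume "\<not> (S \<subseteq> J \<and> card S = 0)"
      then show "\<omega> S = 0" by (auto simp: \<omega>_def)
    qed
    have \<omega>0: "\<omega> (insert j T) = 0" for j T by (simp add: \<omega>_def)
    have d0T: "koszul_d J Dop \<omega> T = 0" for T
      unfolding koszul_d_def \<omega>0 Dop_0 by (auto intro!: sum.neutral)
    have d0: "koszul_d J Dop \<omega> = 0"
      by (rule ext) (simp add: d0T)
    have eqf: "koszul_d J Dop (hop J \<omega>) {} = f"
    proof (rule ext)
      fix s
      have "koszul_d J Dop (hop J \<omega>) {} s = (if (\<exists>k\<in>J. wt {} s k \<noteq> 0) then f s else 0)"
        using homotopy[OF J(1), of \<omega> "{}" s] by (simp add: d0 hop_0 \<omega>_def)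
      also have "\<dots> = f s"
      proof (cases "\<exists>k\<in>J. wt {} s k \<noteq> 0")
        case False
        then have sJ: "\<forall>k\<in>J. s k = 0" by (auto simp: wt_def)
        have "f s = 0"
        proof (cases "\<forall>k\<ge>c. s k = 0")
          case True
          have "\<phi> f s = 0" using f0 by simp
          then show ?thesis using True unfolding \<phi>_def by simp
        next
          case False2: False
          then obtain k where k: "k \<ge> c" "s k \<noteq> 0" by auto
          have "k \<notin> J"
          proof
            assume "k \<in> J"
            then have "s k = 0" using sJ by simp
            then show False using k(2) by simp
          qed
          then have "n < k" using k(1) by (simp add: J_def)
          then show ?thesis using E_supp[OF f, of s k] k by auto
        qed
        then show ?thesis using False by simp
      qed simp
      finally show "koszul_d J Dop (hop J \<omega>) {} s = f s" .
    qed
    have hc: "hop J \<omega> \<in> koszul_chains J (Ecarrier n) 1"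
      using hop_chain[OF J w] by simp
    show ?thesis unfolding koszul_B0_def mem_Collect_eq
      by (intro exI[of _ "hop J \<omega>"] conjI eqf[symmetric] hc)
  qed
  have ker2: "f \<in> Ecarrier n \<and> \<phi> f = 0" if f: "f \<in> koszul_B0 J Dop (Ecarrier n)" for f
  proof -
    obtain \<eta> where eta: "\<eta> \<in> koszul_chains J (Ecarrier n) 1" and fe: "f = koszul_d J Dop \<eta> {}"
      using f unfolding koszul_B0_def mem_Collect_eq by (elim exE conjE) simp
    have "koszul_d J Dop \<eta> {} \<in> Ecarrier n"
      unfolding koszul_d_def if_P[OF empty_subsetI]
    proof (rule E_sum)
      fix j assume "j \<in> J - {}"
      then have j: "1 \<le> j" "j \<le> n" using J(2) by auto
      have D: "Dop j (\<eta> (insert j {})) \<in> Ecarrier n" by (rule E_Dop[OF chain_val[OF eta] j])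
      then show "(if even (card {t \<in> {}. t < j}) then Dop j (\<eta> (insert j {})) else - Dop j (\<eta> (insert j {}))) \<in> Ecarrier n"
        using E_neg[OF D] by simp
    qed
    moreover have "\<phi> f = 0"
    proof (rule ext)
      fix s
      show "\<phi> f s = 0 s"
      proof (cases "\<forall>k\<ge>c. s k = 0")
        case True
        have "f s = 0" unfolding fe kd_apply[OF empty_subsetI]
          using True by (auto intro!: sum.neutral simp: J_def)
        then show ?thesis by (simp add: \<phi>_def)
      next
        case False
        show ?thesis unfolding \<phi>_def if_not_P[OF False] by simp
      qed
    qed
    ultimately show ?thesis using fe by simp
  qed
  have ker: "{f\<in>Ecarrier n. \<phi> f = 0} = koszul_B0 J Dop (Ecarrier n)"
  proof (rule set_eqI)
    fix f
    show "f \<in> {f\<in>Ecarrier n. \<phi> f = 0} \<longleftrightarrow> f \<in> koszul_B0 J Dop (Ecarrier n)"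
    proof
      assume "f \<in> {f\<in>Ecarrier n. \<phi> f = 0}"
      then have "f \<in> Ecarrier n" "\<phi> f = 0" by simp_all
      then show "f \<in> koszul_B0 J Dop (Ecarrier n)" by (rule ker1)
    next
      assume "f \<in> koszul_B0 J Dop (Ecarrier n)"
      then have "f \<in> Ecarrier n \<and> \<phi> f = 0" by (rule ker2)
      then show "f \<in> {f\<in>Ecarrier n. \<phi> f = 0}" by simp
    qed
  qed
  have comm: "\<forall>j\<in>{1..<c}. \<forall>f\<in>Ecarrier n.
              \<phi> (Xop j f) = Xop j (\<phi> f) \<and> \<phi> (Dop j f) = Dop j (\<phi> f)"
  proof (intro ballI conjI)
    fix j f assume j: "j \<in> {1..<c}"
    then have jc: "j < c" by simp
    show "\<phi> (Xop j f) = Xop j (\<phi> f)"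
      by (rule ext) (unfold \<phi>_def Xop_def cond_upd[OF jc], simp)
    show "\<phi> (Dop j f) = Dop j (\<phi> f)"
    proof (rule ext)
      fix r :: "nat \<Rightarrow> nat"
      have e: "(\<forall>k\<ge>c. (r(j := r j - 1)) k = 0) = (\<forall>k\<ge>c. r k = 0)" using jc by auto
      show "\<phi> (Dop j f) r = Dop j (\<phi> f) r" unfolding \<phi>_def Dop_def by (simp only: e) auto
    qed
  qed
  show ?thesis
    unfolding J_def[symmetric]
    apply (intro conjI)
     apply (rule vanish)
    apply (rule exI[of _ \<phi>])
    using lin img ker comm by (intro conjI)
qed

end
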